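(* Let $\mathbb{F}$ be a commutative field, $n\ge 2$ an integer, and $S=\mathbf{PGL}_n(\mathbb{F})$ acting naturally on the projective space $\mathbf{PG}(n-1,\mathbb{F})$. Let $x$ be a point and $\Pi$ a hyperplane of $\mathbf{PG}(n-1,\mathbb{F})$ (any choice), and put $L=S_x$ (the stabilizer of $x$) and $L'=S_\Pi$ (the stabilizer of $\Pi$). Then $(S\wr \mathrm{S}_2,\ L\wr \mathrm{S}_2,\ L'\wr \mathrm{S}_2)$ is an EC-triple.
   Context: For a group $S$ and a subgroup $P$ of the symmetric group on a finite nonempty set $\Omega$, the wreath product $S\wr P$ consists of pairs $(g,p)$ with $g=(g_\omega)_{\omega\in\Omega}\in S^\Omega$ and $p\in P$, with multiplication $(g,p)(g',p')=(g\,p(g'),pp')$, where $p(g')=(g'_{p^{-1}(\omega)})_{\omega\in\Omega}$. For $L\le S$, $L\wr P$ denotes the subgroup $\{(g,p): g\in L^\Omega, p\in P\}$. Here $\mathrm{S}_2$ is the symmetric group on $\{1,2\}$. A triple $(G,H,H')$ with $H,H'\le G$ is an EC-triple if every element of $H$ is conjugate in $G$ to some element of $H'$ and every element of $H'$ is conjugate in $G$ to some element of $H$. *)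

theory Defs
  imports "Jordan_Normal_Form.Determinant" "HOL-Algebra.Coset"
begin

text \<open>Elements of S wr P: pairs (g,p) with g a function Omega -> carrier S (extensional,
  i.e. undefined outside Omega) and p a permutation in P.  Multiplication
  (g,p)(g',p') = (g * p(g'), p p') where p(g')_w = g'_(p^-1 w).\<close>

definition wreath :: "('g, 'm) monoid_scheme \<Rightarrow> 'i set \<Rightarrow> ('i \<Rightarrow> 'i) set
    \<Rightarrow> (('i \<Rightarrow> 'g) \<times> ('i \<Rightarrow> 'i)) monoid" where
  "wreath S \<Omega> P =
    \<lparr> carrier = {(g, p). g \<in> \<Omega> \<rightarrow>\<^sub>E carrier S \<and> p \<in> P},
      mult = (\<lambda>(g, p) (g', p'). ((\<lambda>\<omega>\<in>\<Omega>. g \<omega> \<otimes>\<^bsub>S\<^esub> g' (inv_into UNIV p \<omega>)), p \<circ> p')),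
      one = ((\<lambda>\<omega>\<in>\<Omega>. \<one>\<^bsub>S\<^esub>), id) \<rparr>"

definition wreath_sub :: "'g set \<Rightarrow> 'i set \<Rightarrow> ('i \<Rightarrow> 'i) set
    \<Rightarrow> (('i \<Rightarrow> 'g) \<times> ('i \<Rightarrow> 'i)) set" where
  "wreath_sub L \<Omega> P = {(g, p). g \<in> \<Omega> \<rightarrow>\<^sub>E L \<and> p \<in> P}"

definition Sym2 :: "(nat \<Rightarrow> nat) set" where
  "Sym2 = {p. p permutes {1, 2}}"

definition conjugate_in :: "('a, 'b) monoid_scheme \<Rightarrow> 'a \<Rightarrow> 'a \<Rightarrow> bool" where
  "conjugate_in G h h' \<longleftrightarrow> (\<exists>x\<in>carrier G. x \<otimes>\<^bsub>G\<^esub> h \<otimes>\<^bsub>G\<^esub> inv\<^bsub>G\<^esub> x = h')"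

definition EC_triple :: "('a, 'b) monoid_scheme \<Rightarrow> 'a set \<Rightarrow> 'a set \<Rightarrow> bool" where
  "EC_triple G H H' \<longleftrightarrow> subgroup H G \<and> subgroup H' G \<and>
     (\<forall>h\<in>H. \<exists>h'\<in>H'. conjugate_in G h h') \<and>
     (\<forall>h'\<in>H'. \<exists>h\<in>H. conjugate_in G h' h)"

definition GL :: "nat \<Rightarrow> 'a::field mat monoid" where
  "GL n = \<lparr> carrier = {A \<in> carrier_mat n n. det A \<noteq> 0}, mult = (*), one = 1\<^sub>m n \<rparr>"

definition scalar_mats :: "nat \<Rightarrow> 'a::field mat set" where
  "scalar_mats n = {c \<cdot>\<^sub>m 1\<^sub>m n | c. c \<noteq> 0}"

definition PGL :: "nat \<Rightarrow> 'a::field mat set monoid" where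
  "PGL n = GL n Mod scalar_mats n"

definition proj_point :: "nat \<Rightarrow> 'a::field vec \<Rightarrow> 'a vec set" where
  "proj_point n v = {c \<cdot>\<^sub>v v | c. True}"

definition is_proj_point :: "nat \<Rightarrow> 'a::field vec set \<Rightarrow> bool" where
  "is_proj_point n X \<longleftrightarrow> (\<exists>v\<in>carrier_vec n. v \<noteq> 0\<^sub>v n \<and> X = proj_point n v)"

definition proj_hyperplane :: "nat \<Rightarrow> 'a::field vec \<Rightarrow> 'a vec set" where
  "proj_hyperplane n w = {u \<in> carrier_vec n. w \<bullet> u = 0}"

definition is_proj_hyperplane :: "nat \<Rightarrow> 'a::field vec set \<Rightarrow> bool" where
  "is_proj_hyperplane n X \<longleftrightarrow> (\<exists>w\<in>carrier_vec n. w \<noteq> 0\<^sub>v n \<and> X = proj_hyperplane n w)"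

text \<open>Stabilizer in PGL_n(F) of a subspace X of F^n under the natural action
  [A] . X = A X (well defined since scalars fix every subspace).\<close>
definition PGL_stab :: "nat \<Rightarrow> 'a::field vec set \<Rightarrow> 'a mat set set" where
  "PGL_stab n X = {scalar_mats n #>\<^bsub>GL n\<^esub> A | A.
       A \<in> carrier (GL n) \<and> (\<lambda>u. A *\<^sub>v u) ` X = X}"

end

theory Submission
  imports Defs
begin

lemma Sym2_inv: "p \<in> Sym2 \<Longrightarrow> inv_into UNIV p \<in> Sym2"
  unfolding Sym2_def by (auto intro: permutes_inv)
lemma Sym2_comp: "p \<in> Sym2 \<Longrightarrow> q \<in> Sym2 \<Longrightarrow> p \<circ> q \<in> Sym2"
  unfolding Sym2_def by (auto intro: permutes_compose)
lemma Sym2_bij: "p \<in> Sym2 \<Longrightarrow> bij p"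
  unfolding Sym2_def by (auto intro: permutes_bij)
lemma Sym2_in: "p \<in> Sym2 \<Longrightarrow> w \<in> {1,2} \<Longrightarrow> p w \<in> {1,2}"
  unfolding Sym2_def using permutes_in_image by fastforce
lemma Sym2_inv_in: "p \<in> Sym2 \<Longrightarrow> w \<in> {1,2} \<Longrightarrow> inv_into UNIV p w \<in> {1,2}"
  using Sym2_in Sym2_inv by blast
lemma Sym2_cases: assumes "p \<in> Sym2"
  shows "p = id \<or> (p 1 = 2 \<and> p 2 = 1 \<and> inv_into UNIV p = p)"
proof -
  have pp: "p permutes {1,2}" using assms Sym2_def by auto
  have out: "\<And>x. x \<notin> {1,2} \<Longrightarrow> p x = x" using pp permutes_def by metis
  have inj: "inj p" using pp permutes_inj by blast
  have p1: "p 1 \<in> {1,2}" "p 2 \<in> {1,2}" using Sym2_in assms by auto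
  show ?thesis
  proof (cases "p 1 = 1")
    case True
    then have "p 2 = 2" using p1 inj by (metis insertE injD numeral_eq_one_iff semiring_norm(85) singletonD)
    then have "p = id" using True out by (intro ext) (metis empty_iff id_apply insertE)
    then show ?thesis by simp
  next
    case False
    then have a: "p 1 = 2" using p1 by auto
    then have b: "p 2 = 1" using p1 inj by (metis injD insertE numeral_eq_one_iff semiring_norm(85) singletonD)
    have "inv_into UNIV p = p"
    proof (rule ext)
      fix x show "inv_into UNIV p x = p x"
        using pp a b out by (cases "x \<in> {1,2}") (auto simp: permutes_inv_eq)
    qed
    then show ?thesis using a b by simp
  qed
qed

lemma wreath_carrier: "carrier (wreath S \<Omega> P) = {(g, p). g \<in> \<Omega> \<rightarrow>\<^sub>E carrier S \<and> p \<in> P}"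
  by (simp add: wreath_def)
lemma wreath_mult: "(g, p) \<otimes>\<^bsub>wreath S \<Omega> P\<^esub> (g', p') = ((\<lambda>\<omega>\<in>\<Omega>. g \<omega> \<otimes>\<^bsub>S\<^esub> g' (inv_into UNIV p \<omega>)), p \<circ> p')"
  by (simp add: wreath_def)
lemma wreath_one: "\<one>\<^bsub>wreath S \<Omega> P\<^esub> = ((\<lambda>\<omega>\<in>\<Omega>. \<one>\<^bsub>S\<^esub>), id)"
  by (simp add: wreath_def)

lemma wreath_group: assumes S: "group S" shows "group (wreath S {1,2} Sym2)"
proof (rule groupI)
  interpret S: group S by fact
  let ?W = "wreath S {1,2} Sym2"
  show "\<And>x y. x \<in> carrier ?W \<Longrightarrow> y \<in> carrier ?W \<Longrightarrow> x \<otimes>\<^bsub>?W\<^esub> y \<in> carrier ?W"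
  proof clarify
    fix g p g' p'
    assume "(g, p) \<in> carrier ?W" "(g', p') \<in> carrier ?W"
    then have h: "g \<in> {1,2} \<rightarrow>\<^sub>E carrier S" "g' \<in> {1,2} \<rightarrow>\<^sub>E carrier S"
      "p \<in> Sym2" "p' \<in> Sym2" by (auto simp: wreath_carrier)
    have "\<And>w. w \<in> {1,2} \<Longrightarrow> g w \<otimes>\<^bsub>S\<^esub> g' (inv_into UNIV p w) \<in> carrier S"
      using h Sym2_inv_in[OF h(3)] by (blast intro: S.m_closed)
    then show "(g, p) \<otimes>\<^bsub>?W\<^esub> (g', p') \<in> carrier ?W"
      using h by (auto simp: wreath_carrier wreath_mult Sym2_comp)
  qed
  show "\<one>\<^bsub>?W\<^esub> \<in> carrier ?W"
    by (auto simp: wreath_carrier wreath_one Sym2_def permutes_id)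
  show "\<And>x y z. x \<in> carrier ?W \<Longrightarrow> y \<in> carrier ?W \<Longrightarrow> z \<in> carrier ?W \<Longrightarrow>
      x \<otimes>\<^bsub>?W\<^esub> y \<otimes>\<^bsub>?W\<^esub> z = x \<otimes>\<^bsub>?W\<^esub> (y \<otimes>\<^bsub>?W\<^esub> z)"
  proof clarify
    fix g p g' p' g'' p''
    assume "(g, p) \<in> carrier ?W" "(g', p') \<in> carrier ?W" "(g'', p'') \<in> carrier ?W"
    then have h: "g \<in> {1,2} \<rightarrow>\<^sub>E carrier S" "g' \<in> {1,2} \<rightarrow>\<^sub>E carrier S" "g'' \<in> {1,2} \<rightarrow>\<^sub>E carrier S"
      "p \<in> Sym2" "p' \<in> Sym2" "p'' \<in> Sym2" by (auto simp: wreath_carrier)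
    have io: "inv_into UNIV (p \<circ> p') = inv_into UNIV p' \<circ> inv_into UNIV p" using h by (simp add: o_inv_distrib Sym2_bij)
    show "(g, p) \<otimes>\<^bsub>?W\<^esub> (g', p') \<otimes>\<^bsub>?W\<^esub> (g'', p'') = (g, p) \<otimes>\<^bsub>?W\<^esub> ((g', p') \<otimes>\<^bsub>?W\<^esub> (g'', p''))"
      unfolding wreath_mult io
    proof (intro arg_cong2[where f=Pair] ext)
      fix w show "(\<lambda>\<omega>\<in>{1, 2}. (\<lambda>\<omega>\<in>{1, 2}. g \<omega> \<otimes>\<^bsub>S\<^esub> g' (inv_into UNIV p \<omega>)) \<omega> \<otimes>\<^bsub>S\<^esub> g'' ((inv_into UNIV p' \<circ> inv_into UNIV p) \<omega>)) w =
         (\<lambda>\<omega>\<in>{1, 2}. g \<omega> \<otimes>\<^bsub>S\<^esub> (\<lambda>\<omega>\<in>{1, 2}. g' \<omega> \<otimes>\<^bsub>S\<^esub> g'' (inv_into UNIV p' \<omega>)) (inv_into UNIV p \<omega>)) w"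
      proof (cases "w \<in> {1,2}")
        case True
        then have a: "inv_into UNIV p w \<in> {1,2}" using Sym2_inv_in[OF h(4)] by blast
        then have b: "inv_into UNIV p' (inv_into UNIV p w) \<in> {1,2}" using Sym2_inv_in[OF h(5)] by blast
        have c: "\<And>w. w \<in> {1,2} \<Longrightarrow> g w \<in> carrier S \<and> g' w \<in> carrier S \<and> g'' w \<in> carrier S"
          using h(1-3) by blast
        show ?thesis using True a b c by (simp add: S.m_assoc)
      qed simp
    qed simp
  qed
  show "\<And>x. x \<in> carrier ?W \<Longrightarrow> \<one>\<^bsub>?W\<^esub> \<otimes>\<^bsub>?W\<^esub> x = x"
  proof clarify
    fix g p assume "(g, p) \<in> carrier ?W"
    then have h: "g \<in> {1,2} \<rightarrow>\<^sub>E carrier S" "p \<in> Sym2" by (auto simp: wreath_carrier)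
    show "\<one>\<^bsub>?W\<^esub> \<otimes>\<^bsub>?W\<^esub> (g, p) = (g, p)"
      unfolding wreath_one wreath_mult
    proof (intro arg_cong2[where f=Pair] ext)
      fix w show "(\<lambda>\<omega>\<in>{1, 2}. (\<lambda>\<omega>\<in>{1, 2}. \<one>\<^bsub>S\<^esub>) \<omega> \<otimes>\<^bsub>S\<^esub> g (inv_into UNIV id \<omega>)) w = g w"
        using h(1) by (cases "w \<in> {1,2}") (auto simp: PiE_iff extensional_def)
    qed simp
  qed
  show "\<And>x. x \<in> carrier ?W \<Longrightarrow> \<exists>y\<in>carrier ?W. y \<otimes>\<^bsub>?W\<^esub> x = \<one>\<^bsub>?W\<^esub>"
  proof clarify
    fix g p assume "(g, p) \<in> carrier ?W"
    then have h: "g \<in> {1,2} \<rightarrow>\<^sub>E carrier S" "p \<in> Sym2" by (auto simp: wreath_carrier)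
    have ii: "inv_into UNIV (inv_into UNIV p) = p" using h Sym2_bij by (simp add: inv_inv_eq)
    have io: "inv_into UNIV p \<circ> p = id" using h Sym2_bij by (simp add: bij_def)
    have pin: "\<And>w. w \<in> {1,2} \<Longrightarrow> p w \<in> {1,2}" using Sym2_in[OF h(2)] by blast
    have gc: "\<And>w. w \<in> {1,2} \<Longrightarrow> g w \<in> carrier S" using h(1) by blast
    let ?y = "((\<lambda>\<omega>\<in>{1,2}. inv\<^bsub>S\<^esub> (g (p \<omega>))), inv_into UNIV p)"
    have yc: "?y \<in> carrier ?W" using pin gc Sym2_inv[OF h(2)] by (auto simp: wreath_carrier)
    have "?y \<otimes>\<^bsub>?W\<^esub> (g, p) = \<one>\<^bsub>?W\<^esub>"
      unfolding wreath_one wreath_mult ii io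
    proof (intro arg_cong2[where f=Pair] ext refl)
      fix w show "(\<lambda>\<omega>\<in>{1, 2}. (\<lambda>\<omega>\<in>{1, 2}. inv\<^bsub>S\<^esub> g (p \<omega>)) \<omega> \<otimes>\<^bsub>S\<^esub> g (p \<omega>)) w = (\<lambda>\<omega>\<in>{1, 2}. \<one>\<^bsub>S\<^esub>) w"
        using pin gc by simp
    qed
    then show "\<exists>y\<in>carrier ?W. y \<otimes>\<^bsub>?W\<^esub> (g, p) = \<one>\<^bsub>?W\<^esub>" using yc by blast
  qed
qed

lemma wreath_inv:
  assumes S: "group S" and h: "g \<in> {1,2} \<rightarrow>\<^sub>E carrier S" "p \<in> Sym2"
  shows "inv\<^bsub>wreath S {1,2} Sym2\<^esub> (g, p) = ((\<lambda>\<omega>\<in>{1,2}. inv\<^bsub>S\<^esub> (g (p \<omega>))), inv_into UNIV p)"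
proof -
  interpret S: group S by fact
  interpret W: group "wreath S {1,2} Sym2" using wreath_group[OF S] .
  let ?W = "wreath S {1,2} Sym2"
  have ii: "inv_into UNIV (inv_into UNIV p) = p" using h Sym2_bij by (simp add: inv_inv_eq)
  have io: "inv_into UNIV p \<circ> p = id" using h Sym2_bij by (simp add: bij_def)
  have pin: "\<And>w. w \<in> {1,2} \<Longrightarrow> p w \<in> {1,2}" using Sym2_in[OF h(2)] by blast
  have gc: "\<And>w. w \<in> {1,2} \<Longrightarrow> g w \<in> carrier S" using h(1) by blast
  let ?y = "((\<lambda>\<omega>\<in>{1,2}. inv\<^bsub>S\<^esub> (g (p \<omega>))), inv_into UNIV p)"
  have yc: "?y \<in> carrier ?W" using pin gc Sym2_inv[OF h(2)] by (auto simp: wreath_carrier)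
  have "?y \<otimes>\<^bsub>?W\<^esub> (g, p) = \<one>\<^bsub>?W\<^esub>"
    unfolding wreath_one wreath_mult ii io
  proof (intro arg_cong2[where f=Pair] ext refl)
    fix w show "(\<lambda>\<omega>\<in>{1, 2}. (\<lambda>\<omega>\<in>{1, 2}. inv\<^bsub>S\<^esub> g (p \<omega>)) \<omega> \<otimes>\<^bsub>S\<^esub> g (p \<omega>)) w = (\<lambda>\<omega>\<in>{1, 2}. \<one>\<^bsub>S\<^esub>) w"
      using pin gc by simp
  qed
  then show ?thesis using W.inv_equality yc h by (simp add: wreath_carrier)
qed

lemma wreath_sub_subgroup:
  assumes S: "group S" and L: "subgroup L S"
  shows "subgroup (wreath_sub L {1,2} Sym2) (wreath S {1,2} Sym2)"
proof -
  interpret S: group S by fact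
  interpret W: group "wreath S {1,2} Sym2" using wreath_group[OF S] .
  have Ls: "L \<subseteq> carrier S" using L subgroup.subset by blast
  show ?thesis
  proof (rule W.subgroupI)
    show "wreath_sub L {1, 2} Sym2 \<subseteq> carrier (wreath S {1, 2} Sym2)"
      using Ls by (auto simp: wreath_sub_def wreath_carrier PiE_iff)
    have "((\<lambda>\<omega>\<in>{1,2}. \<one>\<^bsub>S\<^esub>), id) \<in> wreath_sub L {1, 2} Sym2"
      using L by (auto simp: wreath_sub_def Sym2_def permutes_id subgroup.one_closed)
    then show "wreath_sub L {1, 2} Sym2 \<noteq> {}" by blast
  next
    fix a assume "a \<in> wreath_sub L {1, 2} Sym2"
    then obtain g p where a: "a = (g,p)" "g \<in> {1,2} \<rightarrow>\<^sub>E L" "p \<in> Sym2"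
      by (auto simp: wreath_sub_def)
    have g: "g \<in> {1,2} \<rightarrow>\<^sub>E carrier S" using a Ls by (auto simp: PiE_iff)
    have pin: "\<And>w. w \<in> {1,2} \<Longrightarrow> p w \<in> {1,2}" using Sym2_in[OF a(3)] by blast
    show "inv\<^bsub>wreath S {1, 2} Sym2\<^esub> a \<in> wreath_sub L {1, 2} Sym2"
    proof -
      have "\<forall>w\<in>{1,2}. inv\<^bsub>S\<^esub> (g (p w)) \<in> L"
        using a pin by (blast intro: subgroup.m_inv_closed[OF L])
      then show ?thesis unfolding a(1) wreath_inv[OF S g a(3)]
        using Sym2_inv[OF a(3)] by (simp add: wreath_sub_def restrict_PiE_iff)
    qed
  next
    fix a b assume "a \<in> wreath_sub L {1, 2} Sym2" "b \<in> wreath_sub L {1, 2} Sym2"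
    then obtain g p g' p' where a: "a = (g,p)" "g \<in> {1,2} \<rightarrow>\<^sub>E L" "p \<in> Sym2"
       "b = (g',p')" "g' \<in> {1,2} \<rightarrow>\<^sub>E L" "p' \<in> Sym2"
      by (auto simp: wreath_sub_def)
    have "\<forall>w\<in>{1,2}. g w \<otimes>\<^bsub>S\<^esub> g' (inv_into UNIV p w) \<in> L"
      using a Sym2_inv_in[OF a(3)] by (blast intro: subgroup.m_closed[OF L])
    then show "a \<otimes>\<^bsub>wreath S {1, 2} Sym2\<^esub> b \<in> wreath_sub L {1, 2} Sym2"
      using a Sym2_comp[OF a(3) a(6)] by (simp add: wreath_sub_def wreath_mult restrict_PiE_iff)
  qed
qed

lemma conj_from_eq:
  assumes G: "group G" and c: "x \<in> carrier G" "h \<in> carrier G" "h' \<in> carrier G"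
    and e: "x \<otimes>\<^bsub>G\<^esub> h = h' \<otimes>\<^bsub>G\<^esub> x"
  shows "conjugate_in G h h'"
proof -
  interpret group G by fact
  have "x \<otimes>\<^bsub>G\<^esub> h \<otimes>\<^bsub>G\<^esub> inv\<^bsub>G\<^esub> x = h'" using e c by (simp add: m_assoc)
  then show ?thesis unfolding conjugate_in_def using c by blast
qed

lemma wreath_conj:
  assumes S: "group S" and L: "subgroup L S" and L': "subgroup L' S"
    and hyp: "\<And>a. a \<in> L \<Longrightarrow> \<exists>m\<in>carrier S. m \<otimes>\<^bsub>S\<^esub> a \<otimes>\<^bsub>S\<^esub> inv\<^bsub>S\<^esub> m \<in> L'"
    and hin: "h \<in> wreath_sub L {1,2} Sym2"
  shows "\<exists>h'\<in>wreath_sub L' {1,2} Sym2. conjugate_in (wreath S {1,2} Sym2) h h'"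
proof -
  interpret S: group S by fact
  let ?W = "wreath S {1,2} Sym2"
  have Ls: "L \<subseteq> carrier S" using L subgroup.subset by blast
  have L's: "L' \<subseteq> carrier S" using L' subgroup.subset by blast
  obtain g p where a: "h = (g,p)" "g \<in> {1,2} \<rightarrow>\<^sub>E L" "p \<in> Sym2"
    using hin by (auto simp: wreath_sub_def)
  have g1: "g 1 \<in> L" and g2: "g 2 \<in> L" using a(2) by auto
  have hc: "h \<in> carrier ?W" using a Ls by (auto simp: wreath_carrier PiE_iff)
  have sub: "\<And>x. x \<in> wreath_sub L' {1,2} Sym2 \<Longrightarrow> x \<in> carrier ?W"
    using L's by (auto simp: wreath_sub_def wreath_carrier PiE_iff)
  have sub1: "\<And>x. x \<in> wreath_sub (carrier S) {1,2} Sym2 \<Longrightarrow> x \<in> carrier ?W"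
    by (auto simp: wreath_sub_def wreath_carrier PiE_iff)
  have idS: "id \<in> Sym2" by (simp add: Sym2_def permutes_id)
  from Sym2_cases[OF a(3)] show ?thesis
  proof
    assume pid: "p = id"
    obtain m1 where m1: "m1 \<in> carrier S" "m1 \<otimes>\<^bsub>S\<^esub> g 1 \<otimes>\<^bsub>S\<^esub> inv\<^bsub>S\<^esub> m1 \<in> L'" using hyp[OF g1] by blast
    obtain m2 where m2: "m2 \<in> carrier S" "m2 \<otimes>\<^bsub>S\<^esub> g 2 \<otimes>\<^bsub>S\<^esub> inv\<^bsub>S\<^esub> m2 \<in> L'" using hyp[OF g2] by blast
    define x where "x = ((\<lambda>\<omega>\<in>{1::nat,2}. if \<omega> = 1 then m1 else m2), (id::nat\<Rightarrow>nat))"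
    define h' where "h' = ((\<lambda>\<omega>\<in>{1::nat,2}. if \<omega> = 1 then m1 \<otimes>\<^bsub>S\<^esub> g 1 \<otimes>\<^bsub>S\<^esub> inv\<^bsub>S\<^esub> m1
       else m2 \<otimes>\<^bsub>S\<^esub> g 2 \<otimes>\<^bsub>S\<^esub> inv\<^bsub>S\<^esub> m2), (id::nat\<Rightarrow>nat))"
    have h'in: "h' \<in> wreath_sub L' {1,2} Sym2" using m1 m2 idS by (simp add: h'_def wreath_sub_def restrict_PiE_iff)
    have xin: "x \<in> carrier ?W" using m1 m2 idS by (simp add: x_def wreath_carrier restrict_PiE_iff)
    have gc: "g 1 \<in> carrier S" "g 2 \<in> carrier S" using g1 g2 Ls by auto
    have "x \<otimes>\<^bsub>?W\<^esub> h = h' \<otimes>\<^bsub>?W\<^esub> x"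
      unfolding x_def h'_def a(1) pid wreath_mult
    proof (intro arg_cong2[where f=Pair] ext refl)
      fix w show "(\<lambda>\<omega>\<in>{1, 2}. (\<lambda>\<omega>\<in>{1, 2}. if \<omega> = 1 then m1 else m2) \<omega> \<otimes>\<^bsub>S\<^esub> g (inv_into UNIV id \<omega>)) w =
         (\<lambda>\<omega>\<in>{1, 2}. (\<lambda>\<omega>\<in>{1, 2}. if \<omega> = 1 then m1 \<otimes>\<^bsub>S\<^esub> g 1 \<otimes>\<^bsub>S\<^esub> inv\<^bsub>S\<^esub> m1 else m2 \<otimes>\<^bsub>S\<^esub> g 2 \<otimes>\<^bsub>S\<^esub> inv\<^bsub>S\<^esub> m2) \<omega> \<otimes>\<^bsub>S\<^esub>
            (\<lambda>\<omega>\<in>{1, 2}. if \<omega> = 1 then m1 else m2) (inv_into UNIV id \<omega>)) w"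
        using m1 m2 gc by (cases "w = 1"; cases "w = 2") (simp_all add: S.m_assoc)
    qed
    then show ?thesis using conj_from_eq[OF wreath_group[OF S] xin hc] h'in sub by blast
  next
    assume sw: "p 1 = 2 \<and> p 2 = 1 \<and> inv_into UNIV p = p"
    have gc: "g 1 \<in> carrier S" "g 2 \<in> carrier S" using g1 g2 Ls by auto
    have aL: "g 1 \<otimes>\<^bsub>S\<^esub> g 2 \<in> L" using subgroup.m_closed[OF L g1 g2] .
    obtain m where m: "m \<in> carrier S" "m \<otimes>\<^bsub>S\<^esub> (g 1 \<otimes>\<^bsub>S\<^esub> g 2) \<otimes>\<^bsub>S\<^esub> inv\<^bsub>S\<^esub> m \<in> L'" using hyp[OF aL] by blast
    define x where "x = ((\<lambda>\<omega>\<in>{1::nat,2}. if \<omega> = 1 then m else m \<otimes>\<^bsub>S\<^esub> inv\<^bsub>S\<^esub> g 2), (id::nat\<Rightarrow>nat))"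
    define h' where "h' = ((\<lambda>\<omega>\<in>{1::nat,2}. if \<omega> = 1 then m \<otimes>\<^bsub>S\<^esub> (g 1 \<otimes>\<^bsub>S\<^esub> g 2) \<otimes>\<^bsub>S\<^esub> inv\<^bsub>S\<^esub> m
       else \<one>\<^bsub>S\<^esub>), p)"
    have h'in: "h' \<in> wreath_sub L' {1,2} Sym2" using m a(3) subgroup.one_closed[OF L'] by (simp add: h'_def wreath_sub_def restrict_PiE_iff)
    have xin: "x \<in> carrier ?W" using m gc idS by (simp add: x_def wreath_carrier restrict_PiE_iff)
    have e1: "m \<otimes>\<^bsub>S\<^esub> g 1 = m \<otimes>\<^bsub>S\<^esub> (g 1 \<otimes>\<^bsub>S\<^esub> g 2) \<otimes>\<^bsub>S\<^esub> inv\<^bsub>S\<^esub> m \<otimes>\<^bsub>S\<^esub> (m \<otimes>\<^bsub>S\<^esub> inv\<^bsub>S\<^esub> g 2)"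
      using m gc by (simp add: S.m_assoc flip: S.m_assoc[of "inv\<^bsub>S\<^esub> m" m])
    have e2: "m \<otimes>\<^bsub>S\<^esub> inv\<^bsub>S\<^esub> g 2 \<otimes>\<^bsub>S\<^esub> g 2 = \<one>\<^bsub>S\<^esub> \<otimes>\<^bsub>S\<^esub> m"
      using m gc by (simp add: S.m_assoc)
    have "x \<otimes>\<^bsub>?W\<^esub> h = h' \<otimes>\<^bsub>?W\<^esub> x"
      unfolding x_def h'_def a(1) wreath_mult
    proof (intro arg_cong2[where f=Pair] ext)
      fix w show "(\<lambda>\<omega>\<in>{1, 2}. (\<lambda>\<omega>\<in>{1, 2}. if \<omega> = 1 then m else m \<otimes>\<^bsub>S\<^esub> inv\<^bsub>S\<^esub> g 2) \<omega> \<otimes>\<^bsub>S\<^esub> g (inv_into UNIV id \<omega>)) w =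
         (\<lambda>\<omega>\<in>{1, 2}. (\<lambda>\<omega>\<in>{1, 2}. if \<omega> = 1 then m \<otimes>\<^bsub>S\<^esub> (g 1 \<otimes>\<^bsub>S\<^esub> g 2) \<otimes>\<^bsub>S\<^esub> inv\<^bsub>S\<^esub> m else \<one>\<^bsub>S\<^esub>) \<omega> \<otimes>\<^bsub>S\<^esub>
            (\<lambda>\<omega>\<in>{1, 2}. if \<omega> = 1 then m else m \<otimes>\<^bsub>S\<^esub> inv\<^bsub>S\<^esub> g 2) (inv_into UNIV p \<omega>)) w"
        using sw e1 e2 by (cases "w = 1"; cases "w = 2") simp_all
    qed simp
    then show ?thesis using conj_from_eq[OF wreath_group[OF S] xin hc] h'in sub by blast
  qed
qed


lemma ne_of_in: "x \<in> A \<Longrightarrow> A \<noteq> {}" by auto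

lemma EC_from:
  assumes S: "group S" and L: "subgroup L S" and L': "subgroup L' S"
    and h1: "\<And>a. a \<in> L \<Longrightarrow> \<exists>m\<in>carrier S. m \<otimes>\<^bsub>S\<^esub> a \<otimes>\<^bsub>S\<^esub> inv\<^bsub>S\<^esub> m \<in> L'"
    and h2: "\<And>a. a \<in> L' \<Longrightarrow> \<exists>m\<in>carrier S. m \<otimes>\<^bsub>S\<^esub> a \<otimes>\<^bsub>S\<^esub> inv\<^bsub>S\<^esub> m \<in> L"
  shows "EC_triple (wreath S {1,2} Sym2) (wreath_sub L {1,2} Sym2) (wreath_sub L' {1,2} Sym2)"
  unfolding EC_triple_def
  using wreath_sub_subgroup[OF S L] wreath_sub_subgroup[OF S L']
    wreath_conj[OF S L L' h1] wreath_conj[OF S L' L h2] by blast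

lemma GL_carrier: "carrier (GL n) = {A \<in> carrier_mat n n. det A \<noteq> 0}"
  by (simp add: GL_def)
lemma GL_mult: "A \<otimes>\<^bsub>GL n\<^esub> B = A * B" by (simp add: GL_def)
lemma GL_one: "\<one>\<^bsub>GL n\<^esub> = 1\<^sub>m n" by (simp add: GL_def)

lemma inv_ex_mat:
  assumes A: "(A :: 'a :: field mat) \<in> carrier_mat n n" and d: "det A \<noteq> 0"
  shows "\<exists>B \<in> carrier_mat n n. B * A = 1\<^sub>m n \<and> A * B = 1\<^sub>m n"
  using det_non_zero_imp_unit[OF A d, of "()"] by (auto simp: Units_def ring_mat_def)

lemma group_GL: "group (GL n :: 'a :: field mat monoid)"
proof (rule groupI)
  show "\<And>x y. x \<in> carrier (GL n :: 'a mat monoid) \<Longrightarrow> y \<in> carrier (GL n) \<Longrightarrow> x \<otimes>\<^bsub>GL n\<^esub> y \<in> carrier (GL n)"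
    by (auto simp: GL_carrier GL_mult det_mult)
  show "\<one>\<^bsub>GL n\<^esub> \<in> carrier (GL n :: 'a mat monoid)" by (simp add: GL_carrier GL_one)
  show "\<And>x y z. x \<in> carrier (GL n :: 'a mat monoid) \<Longrightarrow> y \<in> carrier (GL n) \<Longrightarrow> z \<in> carrier (GL n) \<Longrightarrow>
    x \<otimes>\<^bsub>GL n\<^esub> y \<otimes>\<^bsub>GL n\<^esub> z = x \<otimes>\<^bsub>GL n\<^esub> (y \<otimes>\<^bsub>GL n\<^esub> z)"
    by (simp add: GL_carrier GL_mult assoc_mult_mat[of _ n n _ n _ n])
  show "\<And>x. x \<in> carrier (GL n :: 'a mat monoid) \<Longrightarrow> \<one>\<^bsub>GL n\<^esub> \<otimes>\<^bsub>GL n\<^esub> x = x"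
    by (auto simp: GL_carrier GL_mult GL_one)
  show "\<And>x. x \<in> carrier (GL n :: 'a mat monoid) \<Longrightarrow> \<exists>y\<in>carrier (GL n). y \<otimes>\<^bsub>GL n\<^esub> x = \<one>\<^bsub>GL n\<^esub>"
  proof -
    fix x :: "'a mat" assume "x \<in> carrier (GL n)"
    then have x: "x \<in> carrier_mat n n" "det x \<noteq> 0" by (auto simp: GL_carrier)
    obtain B where B: "B \<in> carrier_mat n n" "B * x = 1\<^sub>m n" using inv_ex_mat[OF x] by blast
    have "det B \<noteq> 0" using arg_cong[OF B(2), of det] det_mult[OF B(1) x(1)] by auto
    then show "\<exists>y\<in>carrier (GL n). y \<otimes>\<^bsub>GL n\<^esub> x = \<one>\<^bsub>GL n\<^esub>"
      using B by (auto simp: GL_carrier GL_mult GL_one)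
  qed
qed

lemma GL_inv:
  assumes "A \<in> carrier (GL n :: 'a :: field mat monoid)"
  shows "inv\<^bsub>GL n\<^esub> A \<in> carrier_mat n n" "det (inv\<^bsub>GL n\<^esub> A) \<noteq> 0"
    "inv\<^bsub>GL n\<^esub> A * A = 1\<^sub>m n" "A * inv\<^bsub>GL n\<^esub> A = 1\<^sub>m n"
proof -
  interpret group "GL n :: 'a mat monoid" by (rule group_GL)
  show "inv\<^bsub>GL n\<^esub> A \<in> carrier_mat n n" "det (inv\<^bsub>GL n\<^esub> A) \<noteq> 0"
    using inv_closed[OF assms] by (auto simp: GL_carrier)
  show "inv\<^bsub>GL n\<^esub> A * A = 1\<^sub>m n" "A * inv\<^bsub>GL n\<^esub> A = 1\<^sub>m n"
    using l_inv[OF assms] r_inv[OF assms] by (auto simp: GL_mult GL_one)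
qed

lemma sc_left: "A \<in> carrier_mat n m \<Longrightarrow> (c \<cdot>\<^sub>m 1\<^sub>m n) * A = (c::'a::field) \<cdot>\<^sub>m A"
proof -
  assume A: "A \<in> carrier_mat n m"
  have "(c \<cdot>\<^sub>m 1\<^sub>m n) * A = c \<cdot>\<^sub>m (1\<^sub>m n * A)" by (rule mult_smult_assoc_mat[OF one_carrier_mat A])
  also have "1\<^sub>m n * A = A" by (rule left_mult_one_mat[OF A])
  finally show ?thesis .
qed
lemma sc_right: "A \<in> carrier_mat m n \<Longrightarrow> A * (c \<cdot>\<^sub>m 1\<^sub>m n) = (c::'a::field) \<cdot>\<^sub>m A"
proof -
  assume A: "A \<in> carrier_mat m n"
  have "A * (c \<cdot>\<^sub>m 1\<^sub>m n) = c \<cdot>\<^sub>m (A * 1\<^sub>m n)" by (rule mult_smult_distrib[OF A one_carrier_mat])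
  also have "A * 1\<^sub>m n = A" by (rule right_mult_one_mat[OF A])
  finally show ?thesis .
qed
lemma sc_sc: "c \<cdot>\<^sub>m (d \<cdot>\<^sub>m A) = (c * d::'a::field) \<cdot>\<^sub>m A"
  by (rule eq_matI) (simp_all add: mult.assoc)
lemma sc_mult: "(c \<cdot>\<^sub>m 1\<^sub>m n) * (d \<cdot>\<^sub>m 1\<^sub>m n) = (c * d::'a::field) \<cdot>\<^sub>m 1\<^sub>m n"
  using sc_left[of "d \<cdot>\<^sub>m 1\<^sub>m n" n n c] by (simp add: sc_sc)
lemma sc_one: "(1::'a::field) \<cdot>\<^sub>m A = A"
  by (rule eq_matI) simp_all

lemma scalar_normal:
  assumes n: "n \<ge> 1"
  shows "scalar_mats n \<lhd> (GL n :: 'a :: field mat monoid)"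
proof -
  interpret G: group "GL n :: 'a mat monoid" by (rule group_GL)
  have sc_car: "\<And>c. c \<noteq> 0 \<Longrightarrow> c \<cdot>\<^sub>m 1\<^sub>m n \<in> carrier (GL n :: 'a mat monoid)"
    by (simp add: GL_carrier det_smult)
  have sub: "subgroup (scalar_mats n) (GL n :: 'a mat monoid)"
  proof (rule G.subgroupI)
    show "(scalar_mats n :: 'a mat set) \<subseteq> carrier (GL n :: 'a mat monoid)"
      using sc_car unfolding scalar_mats_def by blast
    have "(1::'a) \<cdot>\<^sub>m 1\<^sub>m n \<in> scalar_mats n" unfolding scalar_mats_def by (intro CollectI exI[of _ 1]) simp
    then show "(scalar_mats n :: 'a mat set) \<noteq> {}" by (rule ne_of_in)
  next
    fix a assume "a \<in> (scalar_mats n :: 'a mat set)"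
    then obtain c where c: "c \<noteq> 0" "a = c \<cdot>\<^sub>m 1\<^sub>m n" unfolding scalar_mats_def by blast
    have "(inverse c \<cdot>\<^sub>m 1\<^sub>m n) \<otimes>\<^bsub>GL n\<^esub> a = \<one>\<^bsub>GL n\<^esub>"
      using c by (simp add: GL_mult GL_one sc_mult sc_one)
    then have "inv\<^bsub>GL n\<^esub> a = inverse c \<cdot>\<^sub>m 1\<^sub>m n"
      using G.inv_equality[OF _ sc_car[OF c(1)] sc_car] c by simp
    then show "inv\<^bsub>GL n\<^esub> a \<in> scalar_mats n" using c unfolding scalar_mats_def by (intro CollectI exI[of _ "inverse c"]) simp
  next
    fix a b :: "'a mat" assume "a \<in> scalar_mats n" "b \<in> scalar_mats n"
    then obtain c d where c: "c \<noteq> 0" "a = c \<cdot>\<^sub>m 1\<^sub>m n" "d \<noteq> 0" "b = d \<cdot>\<^sub>m 1\<^sub>m n" unfolding scalar_mats_def by blast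
    have "a \<otimes>\<^bsub>GL n\<^esub> b = (c * d) \<cdot>\<^sub>m 1\<^sub>m n"
      using c by (simp add: GL_mult sc_mult)
    then show "a \<otimes>\<^bsub>GL n\<^esub> b \<in> scalar_mats n" using c unfolding scalar_mats_def by (intro CollectI exI[of _ "c * d"]) simp
  qed
  show ?thesis
  proof (rule G.normal_inv_iff[THEN iffD2], intro conjI sub ballI)
    fix x h :: "'a mat" assume x: "x \<in> carrier (GL n :: 'a mat monoid)" and h: "h \<in> scalar_mats n"
    then obtain c where c: "c \<noteq> 0" "h = c \<cdot>\<^sub>m 1\<^sub>m n" unfolding scalar_mats_def by blast
    have xc: "x \<in> carrier_mat n n" using x by (simp add: GL_carrier)
    have "x \<otimes>\<^bsub>GL n\<^esub> h \<otimes>\<^bsub>GL n\<^esub> inv\<^bsub>GL n\<^esub> x = c \<cdot>\<^sub>m (x * inv\<^bsub>GL n\<^esub> x)"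
      using c xc GL_inv[OF x] by (simp add: GL_mult sc_left sc_right mult_smult_assoc_mat[of _ n n _ n])
    also have "\<dots> = h" using c GL_inv[OF x] by simp
    finally show "x \<otimes>\<^bsub>GL n\<^esub> h \<otimes>\<^bsub>GL n\<^esub> inv\<^bsub>GL n\<^esub> x \<in> scalar_mats n" using h by simp
  qed
qed


definition stab :: "'a::field mat \<Rightarrow> 'a vec set \<Rightarrow> bool" where
  "stab A X \<longleftrightarrow> (\<lambda>u. A *\<^sub>v u) ` X = X"

lemma img_mult:
  assumes "A \<in> carrier_mat n n" "B \<in> carrier_mat n n" "X \<subseteq> carrier_vec n"
  shows "(\<lambda>u. (A * B) *\<^sub>v u) ` X = (\<lambda>u. A *\<^sub>v u) ` ((\<lambda>u. B *\<^sub>v u) ` X)"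
proof -
  have "\<And>u. u \<in> X \<Longrightarrow> (A * B) *\<^sub>v u = A *\<^sub>v (B *\<^sub>v u)" using assms by auto
  then show ?thesis unfolding image_image by (rule image_cong[OF refl])
qed

lemma img_one: "(X :: 'a::field vec set) \<subseteq> carrier_vec n \<Longrightarrow> (\<lambda>u. 1\<^sub>m n *\<^sub>v u) ` X = X"
proof -
  assume X: "X \<subseteq> carrier_vec n"
  have "\<And>u. u \<in> X \<Longrightarrow> 1\<^sub>m n *\<^sub>v u = u"
  proof -
    fix u assume "u \<in> X" then have "u \<in> carrier_vec n" using X by blast
    then show "1\<^sub>m n *\<^sub>v u = u" by simp
  qed
  then show ?thesis by simp
qed

lemma stab_mult: "A \<in> carrier_mat n n \<Longrightarrow> B \<in> carrier_mat n n \<Longrightarrow> X \<subseteq> carrier_vec n \<Longrightarrow>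
  stab A X \<Longrightarrow> stab B X \<Longrightarrow> stab (A * B) X"
  unfolding stab_def by (simp add: img_mult)

lemma stab_inv: "A \<in> carrier_mat n n \<Longrightarrow> Ai \<in> carrier_mat n n \<Longrightarrow> X \<subseteq> carrier_vec n \<Longrightarrow>
  Ai * A = 1\<^sub>m n \<Longrightarrow> stab A X \<Longrightarrow> stab Ai X"
  unfolding stab_def by (metis img_mult img_one)

lemma stab_conj:
  assumes c: "A \<in> carrier_mat n n" "B \<in> carrier_mat n n" "Bi \<in> carrier_mat n n"
    and Y: "Y \<subseteq> carrier_vec n" and Z: "Z \<subseteq> carrier_vec n"
    and BB: "Bi * B = 1\<^sub>m n" and st: "stab A Y" and BY: "(\<lambda>u. B *\<^sub>v u) ` Y = Z"
  shows "stab (B * A * Bi) Z"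
proof -
  have BiZ: "(\<lambda>u. Bi *\<^sub>v u) ` Z = Y" using BY[symmetric] img_mult[OF c(3) c(2) Y] BB img_one[OF Y] by simp
  have "(\<lambda>u. (B * A * Bi) *\<^sub>v u) ` Z = (\<lambda>u. (B * A) *\<^sub>v u) ` ((\<lambda>u. Bi *\<^sub>v u) ` Z)"
    by (rule img_mult[OF mult_carrier_mat[OF c(2) c(1)] c(3) Z])
  also have "\<dots> = (\<lambda>u. B *\<^sub>v u) ` ((\<lambda>u. A *\<^sub>v u) ` Y)" unfolding BiZ using img_mult[OF c(2) c(1) Y] .
  also have "\<dots> = Z" using st BY unfolding stab_def by simp
  finally show ?thesis unfolding stab_def .
qed

lemma PGL_stab_alt: "PGL_stab n X = {scalar_mats n #>\<^bsub>GL n\<^esub> A | A. A \<in> carrier (GL n) \<and> stab A X}"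
  unfolding PGL_stab_def stab_def ..

lemma group_PGL: "n \<ge> 1 \<Longrightarrow> group (PGL n :: 'a::field mat set monoid)"
  unfolding PGL_def by (rule normal.factorgroup_is_group[OF scalar_normal])

lemma PGL_facts:
  assumes n: "n \<ge> 1" and A: "A \<in> carrier (GL n :: 'a::field mat monoid)" and B: "B \<in> carrier (GL n :: 'a mat monoid)"
  shows "scalar_mats n #>\<^bsub>GL n\<^esub> A \<in> carrier (PGL n)"
    "(scalar_mats n #>\<^bsub>GL n\<^esub> A) \<otimes>\<^bsub>PGL n\<^esub> (scalar_mats n #>\<^bsub>GL n\<^esub> B) = scalar_mats n #>\<^bsub>GL n\<^esub> (A * B)"
    "inv\<^bsub>PGL n\<^esub> (scalar_mats n #>\<^bsub>GL n\<^esub> A) = scalar_mats n #>\<^bsub>GL n\<^esub> (inv\<^bsub>GL n\<^esub> A)"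
proof -
  interpret N: normal "scalar_mats n" "GL n :: 'a mat monoid" by (rule scalar_normal[OF n])
  show c: "scalar_mats n #>\<^bsub>GL n\<^esub> A \<in> carrier (PGL n)"
    unfolding PGL_def carrier_FactGroup using A by blast
  show "(scalar_mats n #>\<^bsub>GL n\<^esub> A) \<otimes>\<^bsub>PGL n\<^esub> (scalar_mats n #>\<^bsub>GL n\<^esub> B) = scalar_mats n #>\<^bsub>GL n\<^esub> (A * B)"
    unfolding PGL_def using N.rcos_sum[OF A B] by (simp add: GL_mult)
  show "inv\<^bsub>PGL n\<^esub> (scalar_mats n #>\<^bsub>GL n\<^esub> A) = scalar_mats n #>\<^bsub>GL n\<^esub> (inv\<^bsub>GL n\<^esub> A)"
    using N.inv_FactGroup[OF c[unfolded PGL_def]] N.rcos_inv[OF A] unfolding PGL_def by simp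
qed

lemma PGL_stab_subgroup:
  assumes n: "n \<ge> 1" and X: "X \<subseteq> carrier_vec n"
  shows "subgroup (PGL_stab n X) (PGL n :: 'a::field mat set monoid)"
proof -
  interpret G: group "PGL n :: 'a mat set monoid" by (rule group_PGL[OF n])
  interpret GL: group "GL n :: 'a mat monoid" by (rule group_GL)
  show ?thesis
  proof (rule G.subgroupI)
    show "PGL_stab n X \<subseteq> carrier (PGL n :: 'a mat set monoid)"
      unfolding PGL_stab_alt using PGL_facts(1)[OF n] by blast
    have "stab (1\<^sub>m n) X" unfolding stab_def by (rule img_one[OF X])
    then have "scalar_mats n #>\<^bsub>GL n\<^esub> \<one>\<^bsub>GL n\<^esub> \<in> PGL_stab n X"
      unfolding PGL_stab_alt using GL.one_closed by (auto simp: GL_one)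
    then show "PGL_stab n X \<noteq> {}" by (rule ne_of_in)
  next
    fix a assume "a \<in> PGL_stab n X"
    then obtain A where A: "a = scalar_mats n #>\<^bsub>GL n\<^esub> A" "A \<in> carrier (GL n)" "stab A X"
      unfolding PGL_stab_alt by blast
    have "stab (inv\<^bsub>GL n\<^esub> A) X"
      using stab_inv[OF _ GL_inv(1)[OF A(2)] X GL_inv(3)[OF A(2)] A(3)] A(2) by (simp add: GL_carrier)
    then show "inv\<^bsub>PGL n\<^esub> a \<in> PGL_stab n X"
      unfolding A(1) PGL_facts(3)[OF n A(2) A(2)] PGL_stab_alt using GL.inv_closed[OF A(2)] by blast
  next
    fix a b assume "a \<in> PGL_stab n X" "b \<in> PGL_stab n X"
    then obtain A B where A: "a = scalar_mats n #>\<^bsub>GL n\<^esub> A" "A \<in> carrier (GL n)" "stab A X"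
      and B: "b = scalar_mats n #>\<^bsub>GL n\<^esub> B" "B \<in> carrier (GL n)" "stab B X"
      unfolding PGL_stab_alt by blast
    have "stab (A * B) X" using stab_mult[OF _ _ X A(3) B(3)] A(2) B(2) by (simp add: GL_carrier)
    moreover have "A * B \<in> carrier (GL n)" using GL.m_closed[OF A(2) B(2)] by (simp add: GL_mult)
    ultimately show "a \<otimes>\<^bsub>PGL n\<^esub> b \<in> PGL_stab n X"
      unfolding A(1) B(1) PGL_facts(2)[OF n A(2) B(2)] PGL_stab_alt by blast
  qed
qed

lemma PGL_conj_cond:
  assumes n: "n \<ge> 1"
    and core: "\<And>A. A \<in> carrier (GL n) \<Longrightarrow> stab A X \<Longrightarrow> \<exists>B\<in>carrier (GL n). stab (B * A * inv\<^bsub>GL n\<^esub> B) Y"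
    and a: "a \<in> PGL_stab n X"
  shows "\<exists>m\<in>carrier (PGL n :: 'a::field mat set monoid). m \<otimes>\<^bsub>PGL n\<^esub> a \<otimes>\<^bsub>PGL n\<^esub> inv\<^bsub>PGL n\<^esub> m \<in> PGL_stab n Y"
proof -
  interpret GL: group "GL n :: 'a mat monoid" by (rule group_GL)
  obtain A where A: "a = scalar_mats n #>\<^bsub>GL n\<^esub> A" "A \<in> carrier (GL n)" "stab A X"
    using a unfolding PGL_stab_alt by blast
  obtain B where B: "B \<in> carrier (GL n)" "stab (B * A * inv\<^bsub>GL n\<^esub> B) Y" using core[OF A(2,3)] by blast
  have BA: "B * A \<in> carrier (GL n)" using GL.m_closed[OF B(1) A(2)] by (simp add: GL_mult)
  have Bi: "inv\<^bsub>GL n\<^esub> B \<in> carrier (GL n)" using GL.inv_closed[OF B(1)] .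
  have "(scalar_mats n #>\<^bsub>GL n\<^esub> B) \<otimes>\<^bsub>PGL n\<^esub> a \<otimes>\<^bsub>PGL n\<^esub> inv\<^bsub>PGL n\<^esub> (scalar_mats n #>\<^bsub>GL n\<^esub> B)
     = scalar_mats n #>\<^bsub>GL n\<^esub> (B * A * inv\<^bsub>GL n\<^esub> B)"
    unfolding A(1) PGL_facts(2)[OF n B(1) A(2)] PGL_facts(3)[OF n B(1) B(1)] PGL_facts(2)[OF n BA Bi] ..
  moreover have "B * A * inv\<^bsub>GL n\<^esub> B \<in> carrier (GL n)" using GL.m_closed[OF BA Bi] by (simp add: GL_mult)
  ultimately show ?thesis using PGL_facts(1)[OF n B(1) B(1)] B(2) unfolding PGL_stab_alt by auto
qed


definition Tm :: "nat \<Rightarrow> 'a::field vec \<Rightarrow> 'a vec \<Rightarrow> nat \<Rightarrow> 'a mat" where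
  "Tm n x y k = mat n n (\<lambda>(i,j). (if i = j then 1 else 0) + (if j = k then (y$i - x$i) / x$k else 0))"

lemma Tm_carrier: "Tm n x y k \<in> carrier_mat n n" by (simp add: Tm_def)

lemma sum_if_eq: "(k::nat) < n \<Longrightarrow> (\<Sum>l\<in>{0..<n}. if l = k then f l else 0) = f k"
  by (simp add: sum.delta')
lemma sum_if_eq': "(k::nat) < n \<Longrightarrow> (\<Sum>l\<in>{0..<n}. if k = l then f l else 0) = f k"
  by (simp add: sum.delta)

lemma Tm_vec:
  assumes x: "x \<in> carrier_vec n" and y: "y \<in> carrier_vec n" and k: "k < n" and xk: "x$k \<noteq> 0"
  shows "Tm n x y k *\<^sub>v x = y"
proof (rule eq_vecI)
  show "dim_vec (Tm n x y k *\<^sub>v x) = dim_vec y" using y by (simp add: Tm_def)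
  fix i assume "i < dim_vec y"
  then have i: "i < n" using y by simp
  have "(Tm n x y k *\<^sub>v x) $ i = (\<Sum>l\<in>{0..<n}. ((if i = l then 1 else 0) + (if l = k then (y$i - x$i) / x$k else 0)) * x $ l)"
    using i x by (simp add: Tm_def scalar_prod_def)
  also have "\<dots> = (\<Sum>l\<in>{0..<n}. (if i = l then x $ l else 0)) + (\<Sum>l\<in>{0..<n}. (if l = k then (y$i - x$i) / x$k * x $ l else 0))"
    by (subst sum.distrib[symmetric]) (rule sum.cong, auto simp: distrib_right)
  also have "\<dots> = x $ i + (y$i - x$i)" using i k xk by (simp add: sum_if_eq sum_if_eq')
  finally show "(Tm n x y k *\<^sub>v x) $ i = y $ i" by simp
qed

lemma Tm_inv:
  assumes x: "x \<in> carrier_vec n" and y: "y \<in> carrier_vec n" and k: "k < n" and xk: "x$k \<noteq> 0" and yk: "y$k \<noteq> 0"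
  shows "Tm n y x k * Tm n x y k = 1\<^sub>m n"
proof (rule eq_matI)
  show "dim_row (Tm n y x k * Tm n x y k) = dim_row (1\<^sub>m n)" "dim_col (Tm n y x k * Tm n x y k) = dim_col (1\<^sub>m n)"
    by (simp_all add: Tm_def)
  fix i j assume "i < dim_row (1\<^sub>m n)" "j < dim_col (1\<^sub>m n)"
  then have i: "i < n" and j: "j < n" by auto
  let ?r = "(x$i - y$i) / y$k" and ?s = "\<lambda>l. (y$l - x$l) / x$k"
  have "(Tm n y x k * Tm n x y k) $$ (i, j) = (\<Sum>l\<in>{0..<n}. ((if i = l then 1 else 0) + (if l = k then ?r else 0)) *
       ((if l = j then 1 else 0) + (if j = k then ?s l else 0)))"
    using i j by (simp add: Tm_def scalar_prod_def)
  also have "\<dots> = (\<Sum>l\<in>{0..<n}. (if i = l then (if l = j then 1 else 0) + (if j = k then ?s l else 0) else 0))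
     + (\<Sum>l\<in>{0..<n}. (if l = k then ?r * ((if l = j then 1 else 0) + (if j = k then ?s l else 0)) else 0))"
    by (subst sum.distrib[symmetric]) (rule sum.cong, auto simp: distrib_right)
  also have "\<dots> = ((if i = j then 1 else 0) + (if j = k then ?s i else 0)) + ?r * ((if k = j then 1 else 0) + (if j = k then ?s k else 0))"
    using i k by (simp only: sum_if_eq sum_if_eq')
  also have "\<dots> = (if i = j then 1 else 0)"
    using xk yk by (cases "j = k") (auto simp: field_simps)
  finally show "(Tm n y x k * Tm n x y k) $$ (i, j) = 1\<^sub>m n $$ (i, j)" using i j by simp
qed

lemma GL_of_inv:
  assumes "A \<in> carrier_mat n n" "B \<in> carrier_mat n n" "B * A = (1\<^sub>m n :: 'a::field mat)"
  shows "A \<in> carrier (GL n)" "B \<in> carrier (GL n)"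
proof -
  have "det B * det A = 1" using arg_cong[OF assms(3), of det] det_mult[OF assms(2,1)] by simp
  then have "det A \<noteq> 0" "det B \<noteq> 0" by auto
  then show "A \<in> carrier (GL n)" "B \<in> carrier (GL n)" using assms by (auto simp: GL_carrier)
qed

lemma nonzero_coord:
  assumes "x \<in> carrier_vec n" "x \<noteq> 0\<^sub>v n"
  shows "\<exists>k<n. x $ k \<noteq> (0::'a::zero)"
proof (rule ccontr)
  assume "\<not> ?thesis"
  then have "x = 0\<^sub>v n" using assms(1) by (intro eq_vecI) auto
  then show False using assms(2) by simp
qed

lemma transitive:
  assumes x: "x \<in> carrier_vec n" "x \<noteq> 0\<^sub>v n" and y: "y \<in> carrier_vec n" "y \<noteq> 0\<^sub>v n"
  shows "\<exists>M\<in>carrier (GL n :: 'a::field mat monoid). M *\<^sub>v x = y"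
proof -
  interpret GL: group "GL n :: 'a mat monoid" by (rule group_GL)
  obtain k where k: "k < n" "x $ k \<noteq> 0" using nonzero_coord[OF x] by blast
  obtain j where j: "j < n" "y $ j \<noteq> 0" using nonzero_coord[OF y] by blast
  define o1 where "o1 = vec n (\<lambda>_. 1::'a)"
  have o1: "o1 \<in> carrier_vec n" "o1 $ k \<noteq> 0" "o1 $ j \<noteq> 0" using k j by (auto simp: o1_def)
  have T1: "Tm n x o1 k \<in> carrier (GL n)"
    using GL_of_inv(1)[OF Tm_carrier Tm_carrier Tm_inv[OF x(1) o1(1) k(1) k(2) o1(2)]] .
  have T2: "Tm n o1 y j \<in> carrier (GL n)"
    using GL_of_inv(1)[OF Tm_carrier Tm_carrier Tm_inv[OF o1(1) y(1) j(1) o1(3) j(2)]] .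
  have "(Tm n o1 y j * Tm n x o1 k) *\<^sub>v x = Tm n o1 y j *\<^sub>v (Tm n x o1 k *\<^sub>v x)"
    by (rule assoc_mult_mat_vec[OF Tm_carrier Tm_carrier x(1)])
  then have "(Tm n o1 y j * Tm n x o1 k) *\<^sub>v x = y"
    using Tm_vec[OF x(1) o1(1) k] Tm_vec[OF o1(1) y(1) j(1) o1(3)] by simp
  moreover have "Tm n o1 y j * Tm n x o1 k \<in> carrier (GL n)" using GL.m_closed[OF T2 T1] by (simp add: GL_mult)
  ultimately show ?thesis by blast
qed


lemma vec_eq_of_minus: "a \<in> carrier_vec n \<Longrightarrow> b \<in> carrier_vec n \<Longrightarrow> a - b = 0\<^sub>v n \<Longrightarrow> a = (b :: 'a::field vec)"
proof -
  assume ab: "a \<in> carrier_vec n" "b \<in> carrier_vec n" "a - b = 0\<^sub>v n"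
  show "a = b"
  proof (rule eq_vecI)
    fix i assume "i < dim_vec b"
    then have i: "i < n" using ab by simp
    have "(a - b) $ i = 0\<^sub>v n $ i" using ab(3) by (rule arg_cong)
    then have "a $ i - b $ i = 0" using ab(1,2) i by simp
    then show "a $ i = b $ i" by simp
  qed (use ab in simp)
qed

lemma sc_mat_vec: "v \<in> carrier_vec n \<Longrightarrow> (c \<cdot>\<^sub>m 1\<^sub>m n) *\<^sub>v v = (c::'a::field) \<cdot>\<^sub>v v"
  by (rule eq_vecI) auto

lemma transpose_sc_minus: "A \<in> carrier_mat n n \<Longrightarrow> transpose_mat (A - c \<cdot>\<^sub>m 1\<^sub>m n) = transpose_mat A - (c::'a::field) \<cdot>\<^sub>m 1\<^sub>m n"
  by (rule eq_matI) auto

lemma eig_det: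
  assumes A: "A \<in> carrier_mat n n"
  shows "(\<exists>v\<in>carrier_vec n. v \<noteq> 0\<^sub>v n \<and> A *\<^sub>v v = c \<cdot>\<^sub>v v) \<longleftrightarrow> det (A - c \<cdot>\<^sub>m 1\<^sub>m n) = (0::'a::field)"
proof -
  have M: "A - c \<cdot>\<^sub>m 1\<^sub>m n \<in> carrier_mat n n" by (rule minus_carrier_mat) simp
  have eq: "\<And>v. v \<in> carrier_vec n \<Longrightarrow> (A - c \<cdot>\<^sub>m 1\<^sub>m n) *\<^sub>v v = A *\<^sub>v v - c \<cdot>\<^sub>v v"
    using A by (simp add: minus_mult_distrib_mat_vec sc_mat_vec)
  have "\<And>v. v \<in> carrier_vec n \<Longrightarrow> (A - c \<cdot>\<^sub>m 1\<^sub>m n) *\<^sub>v v = 0\<^sub>v n \<longleftrightarrow> A *\<^sub>v v = c \<cdot>\<^sub>v v"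
  proof -
    fix v :: "'a vec" assume v: "v \<in> carrier_vec n"
    have c1: "A *\<^sub>v v \<in> carrier_vec n" "c \<cdot>\<^sub>v v \<in> carrier_vec n" using A v by auto
    show "(A - c \<cdot>\<^sub>m 1\<^sub>m n) *\<^sub>v v = 0\<^sub>v n \<longleftrightarrow> A *\<^sub>v v = c \<cdot>\<^sub>v v"
      unfolding eq[OF v] using vec_eq_of_minus[OF c1] c1 by auto
  qed
  then show ?thesis unfolding det_0_iff_vec_prod_zero_field[OF M] by blast
qed

lemma eig_transpose:
  assumes A: "A \<in> carrier_mat n n" and v: "v \<in> carrier_vec n" "v \<noteq> 0\<^sub>v n" and e: "A *\<^sub>v v = c \<cdot>\<^sub>v v"
  shows "\<exists>u\<in>carrier_vec n. u \<noteq> 0\<^sub>v n \<and> transpose_mat A *\<^sub>v u = (c::'a::field) \<cdot>\<^sub>v u"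
proof -
  have "det (A - c \<cdot>\<^sub>m 1\<^sub>m n) = 0" using eig_det[OF A] v e by blast
  then have "det (transpose_mat A - c \<cdot>\<^sub>m 1\<^sub>m n) = 0"
    using det_transpose[OF minus_carrier_mat[of "c \<cdot>\<^sub>m 1\<^sub>m n" n n A]] A by (simp add: transpose_sc_minus)
  then show ?thesis using eig_det[of "transpose_mat A" n c] A by simp
qed

lemma GL_cancel:
  assumes A: "A \<in> carrier (GL n :: 'a::field mat monoid)" and v: "v \<in> carrier_vec n"
  shows "inv\<^bsub>GL n\<^esub> A *\<^sub>v (A *\<^sub>v v) = v" "A *\<^sub>v (inv\<^bsub>GL n\<^esub> A *\<^sub>v v) = v"
proof -
  have Ac: "A \<in> carrier_mat n n" using A by (simp add: GL_carrier)
  show "inv\<^bsub>GL n\<^esub> A *\<^sub>v (A *\<^sub>v v) = v"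
    using assoc_mult_mat_vec[OF GL_inv(1)[OF A] Ac v] GL_inv(3)[OF A] v by simp
  show "A *\<^sub>v (inv\<^bsub>GL n\<^esub> A *\<^sub>v v) = v"
    using assoc_mult_mat_vec[OF Ac GL_inv(1)[OF A] v] GL_inv(4)[OF A] v by simp
qed

lemma lam_nz:
  assumes A: "A \<in> carrier (GL n :: 'a::field mat monoid)" and v: "v \<in> carrier_vec n" "v \<noteq> 0\<^sub>v n"
    and e: "A *\<^sub>v v = c \<cdot>\<^sub>v v"
  shows "c \<noteq> 0"
proof
  assume "c = 0"
  then have "A *\<^sub>v v = 0 \<cdot>\<^sub>v v" using e by simp
  then have "v = inv\<^bsub>GL n\<^esub> A *\<^sub>v (0 \<cdot>\<^sub>v v)" using GL_cancel(1)[OF A v(1)] by simp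
  also have "\<dots> = 0 \<cdot>\<^sub>v (inv\<^bsub>GL n\<^esub> A *\<^sub>v v)" by (rule mult_mat_vec[OF GL_inv(1)[OF A] v(1)])
  also have "\<dots> = 0\<^sub>v n" using GL_inv(1)[OF A] by (intro eq_vecI) auto
  finally show False using v by simp
qed

lemma proj_point_sub: "v \<in> carrier_vec n \<Longrightarrow> proj_point n v \<subseteq> carrier_vec n"
  unfolding proj_point_def by auto

lemma proj_hyp_sub: "proj_hyperplane n w \<subseteq> carrier_vec n"
  unfolding proj_hyperplane_def by auto

lemma eig_pt:
  assumes A: "A \<in> carrier_mat n n" and v: "v \<in> carrier_vec n" and st: "stab A (proj_point n v)"
  shows "\<exists>c. A *\<^sub>v v = (c::'a::field) \<cdot>\<^sub>v v"
proof -
  have "v \<in> proj_point n v" unfolding proj_point_def by (rule CollectI, rule exI[of _ 1]) simp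
  then have "A *\<^sub>v v \<in> proj_point n v" using st unfolding stab_def by blast
  then show ?thesis unfolding proj_point_def by blast
qed

lemma pt_stab:
  assumes A: "A \<in> carrier_mat n n" and v: "v \<in> carrier_vec n" and e: "A *\<^sub>v v = c \<cdot>\<^sub>v v" and c: "c \<noteq> (0::'a::field)"
  shows "stab A (proj_point n v)"
  unfolding stab_def
proof
  show "(\<lambda>u. A *\<^sub>v u) ` proj_point n v \<subseteq> proj_point n v"
  proof
    fix y assume "y \<in> (\<lambda>u. A *\<^sub>v u) ` proj_point n v"
    then obtain d where y: "y = A *\<^sub>v (d \<cdot>\<^sub>v v)" unfolding proj_point_def by blast
    have "y = (d * c) \<cdot>\<^sub>v v" unfolding y mult_mat_vec[OF A v] e by (simp add: smult_smult_assoc)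
    then show "y \<in> proj_point n v" unfolding proj_point_def by blast
  qed
  show "proj_point n v \<subseteq> (\<lambda>u. A *\<^sub>v u) ` proj_point n v"
  proof
    fix y assume "y \<in> proj_point n v"
    then obtain d where y: "y = d \<cdot>\<^sub>v v" unfolding proj_point_def by blast
    have "A *\<^sub>v ((d / c) \<cdot>\<^sub>v v) = y" unfolding y mult_mat_vec[OF A v] e using c by (simp add: smult_smult_assoc)
    moreover have "(d / c) \<cdot>\<^sub>v v \<in> proj_point n v" unfolding proj_point_def by blast
    ultimately show "y \<in> (\<lambda>u. A *\<^sub>v u) ` proj_point n v" by blast
  qed
qed

lemma pt_transport:
  assumes M: "M \<in> carrier_mat n n" and v: "v \<in> carrier_vec n" and e: "M *\<^sub>v v = v0"
  shows "(\<lambda>u. M *\<^sub>v u) ` proj_point n v = proj_point n (v0::'a::field vec)"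
proof
  show "(\<lambda>u. M *\<^sub>v u) ` proj_point n v \<subseteq> proj_point n v0"
  proof
    fix y assume "y \<in> (\<lambda>u. M *\<^sub>v u) ` proj_point n v"
    then obtain d where y: "y = M *\<^sub>v (d \<cdot>\<^sub>v v)" unfolding proj_point_def by blast
    have "y = d \<cdot>\<^sub>v v0" unfolding y mult_mat_vec[OF M v] e ..
    then show "y \<in> proj_point n v0" unfolding proj_point_def by blast
  qed
  show "proj_point n v0 \<subseteq> (\<lambda>u. M *\<^sub>v u) ` proj_point n v"
  proof
    fix y assume "y \<in> proj_point n v0"
    then obtain d where y: "y = d \<cdot>\<^sub>v v0" unfolding proj_point_def by blast
    have "M *\<^sub>v (d \<cdot>\<^sub>v v) = y" unfolding y mult_mat_vec[OF M v] e ..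
    moreover have "d \<cdot>\<^sub>v v \<in> proj_point n v" unfolding proj_point_def by blast
    ultimately show "y \<in> (\<lambda>u. M *\<^sub>v u) ` proj_point n v" by blast
  qed
qed


lemma hyp_stab:
  assumes A: "A \<in> carrier (GL n :: 'a::field mat monoid)" and u: "u \<in> carrier_vec n"
    and e: "transpose_mat A *\<^sub>v u = c \<cdot>\<^sub>v u" and c: "c \<noteq> 0"
  shows "stab A (proj_hyperplane n u)"
  unfolding stab_def
proof
  have Ac: "A \<in> carrier_mat n n" using A by (simp add: GL_carrier)
  have key: "\<And>y::'a vec. y \<in> carrier_vec n \<Longrightarrow> u \<bullet> (A *\<^sub>v y) = c * (u \<bullet> y)"
  proof -
    fix y :: "'a vec" assume y: "y \<in> carrier_vec n"
    have "u \<bullet> (A *\<^sub>v y) = (transpose_mat A *\<^sub>v u) \<bullet> y" using transpose_vec_mult_scalar[OF Ac y u] by simp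
    also have "\<dots> = c * (u \<bullet> y)" unfolding e using u y by simp
    finally show "u \<bullet> (A *\<^sub>v y) = c * (u \<bullet> y)" .
  qed
  show "(\<lambda>y. A *\<^sub>v y) ` proj_hyperplane n u \<subseteq> proj_hyperplane n u"
  proof
    fix z assume "z \<in> (\<lambda>y. A *\<^sub>v y) ` proj_hyperplane n u"
    then obtain y where y: "z = A *\<^sub>v y" "y \<in> carrier_vec n" "u \<bullet> y = 0" unfolding proj_hyperplane_def by blast
    have "u \<bullet> z = 0" using key[OF y(2)] y by simp
    moreover have "z \<in> carrier_vec n" using y Ac by simp
    ultimately show "z \<in> proj_hyperplane n u" unfolding proj_hyperplane_def by blast
  qed
  show "proj_hyperplane n u \<subseteq> (\<lambda>y. A *\<^sub>v y) ` proj_hyperplane n u"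
  proof
    fix z assume "z \<in> proj_hyperplane n u"
    then have z: "z \<in> carrier_vec n" "u \<bullet> z = 0" unfolding proj_hyperplane_def by auto
    define t where "t = inv\<^bsub>GL n\<^esub> A *\<^sub>v z"
    have t: "t \<in> carrier_vec n" using GL_inv(1)[OF A] z by (simp add: t_def)
    have At: "A *\<^sub>v t = z" unfolding t_def by (rule GL_cancel(2)[OF A z(1)])
    have "c * (u \<bullet> t) = 0" using key[OF t] At z by simp
    then have "u \<bullet> t = 0" using c by simp
    then have "t \<in> proj_hyperplane n u" using t unfolding proj_hyperplane_def by blast
    then show "z \<in> (\<lambda>y. A *\<^sub>v y) ` proj_hyperplane n u" using At by blast
  qed
qed

lemma perp:
  assumes w: "w \<in> carrier_vec n" "w \<noteq> 0\<^sub>v n" and z: "z \<in> carrier_vec n"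
    and orth: "\<And>y. y \<in> proj_hyperplane n w \<Longrightarrow> z \<bullet> y = 0"
  shows "\<exists>c. z = c \<cdot>\<^sub>v (w :: 'a::field vec)"
proof -
  obtain k where k: "k < n" "w $ k \<noteq> 0" using nonzero_coord[OF w] by blast
  have "z = (z $ k / w $ k) \<cdot>\<^sub>v w"
  proof (rule eq_vecI)
    fix j assume "j < dim_vec ((z $ k / w $ k) \<cdot>\<^sub>v w)"
    then have j: "j < n" using w by simp
    show "z $ j = ((z $ k / w $ k) \<cdot>\<^sub>v w) $ j"
    proof (cases "j = k")
      case True then show ?thesis using k j w(1) by simp
    next
      case False
      define y where "y = (w $ k) \<cdot>\<^sub>v unit_vec n j - (w $ j) \<cdot>\<^sub>v unit_vec n k"
      have dot: "\<And>v. v \<in> carrier_vec n \<Longrightarrow> v \<bullet> y = w $ k * v $ j - w $ j * v $ k"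
        unfolding y_def using j k by (simp add: scalar_prod_minus_distrib[of _ n])
      have yc: "y \<in> carrier_vec n" unfolding y_def by simp
      have "w \<bullet> y = 0" using dot[OF w(1)] by simp
      then have "y \<in> proj_hyperplane n w" using yc unfolding proj_hyperplane_def by blast
      then have "z \<bullet> y = 0" by (rule orth)
      then have "w $ k * z $ j = w $ j * z $ k" using dot[OF z] by simp
      then show ?thesis using k j w(1) by (simp add: field_simps)
    qed
  qed (use w z in simp)
  then show ?thesis by blast
qed

lemma hyp_transport:
  assumes u: "u \<in> carrier_vec n" "u \<noteq> 0\<^sub>v n" and w: "w \<in> carrier_vec n" "w \<noteq> 0\<^sub>v n"
  shows "\<exists>B\<in>carrier (GL n :: 'a::field mat monoid). (\<lambda>y. B *\<^sub>v y) ` proj_hyperplane n u = proj_hyperplane n w"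
proof -
  obtain M where M: "M \<in> carrier (GL n :: 'a mat monoid)" "M *\<^sub>v w = u" using transitive[OF w u] by blast
  have Mc: "M \<in> carrier_mat n n" using M by (simp add: GL_carrier)
  define B where "B = transpose_mat M"
  define Bi where "Bi = transpose_mat (inv\<^bsub>GL n\<^esub> M)"
  have Bc: "B \<in> carrier_mat n n" and Bic: "Bi \<in> carrier_mat n n"
    using Mc GL_inv(1)[OF M(1)] by (auto simp: B_def Bi_def)
  have BBi: "B * Bi = 1\<^sub>m n" unfolding B_def Bi_def
    using transpose_mult[OF GL_inv(1)[OF M(1)] Mc] GL_inv(3)[OF M(1)] by simp
  have BiB: "Bi * B = 1\<^sub>m n" unfolding B_def Bi_def
    using transpose_mult[OF Mc GL_inv(1)[OF M(1)]] GL_inv(4)[OF M(1)] by simp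
  have BG: "B \<in> carrier (GL n)" using GL_of_inv(1)[OF Bc Bic BiB] .
  have key: "\<And>y::'a vec. y \<in> carrier_vec n \<Longrightarrow> w \<bullet> (B *\<^sub>v y) = u \<bullet> y"
  proof -
    fix y :: "'a vec" assume y: "y \<in> carrier_vec n"
    have "w \<bullet> (B *\<^sub>v y) = (transpose_mat B *\<^sub>v w) \<bullet> y" using transpose_vec_mult_scalar[OF Bc y w(1)] by simp
    also have "\<dots> = u \<bullet> y" unfolding B_def using M(2) by simp
    finally show "w \<bullet> (B *\<^sub>v y) = u \<bullet> y" .
  qed
  have "(\<lambda>y. B *\<^sub>v y) ` proj_hyperplane n u = proj_hyperplane n w"
  proof
    show "(\<lambda>y. B *\<^sub>v y) ` proj_hyperplane n u \<subseteq> proj_hyperplane n w"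
    proof
      fix z assume "z \<in> (\<lambda>y. B *\<^sub>v y) ` proj_hyperplane n u"
      then obtain y where y: "z = B *\<^sub>v y" "y \<in> carrier_vec n" "u \<bullet> y = 0" unfolding proj_hyperplane_def by blast
      have "w \<bullet> z = 0" using key[OF y(2)] y by simp
      moreover have "z \<in> carrier_vec n" using y Bc by simp
      ultimately show "z \<in> proj_hyperplane n w" unfolding proj_hyperplane_def by blast
    qed
    show "proj_hyperplane n w \<subseteq> (\<lambda>y. B *\<^sub>v y) ` proj_hyperplane n u"
    proof
      fix z assume "z \<in> proj_hyperplane n w"
      then have z: "z \<in> carrier_vec n" "w \<bullet> z = 0" unfolding proj_hyperplane_def by auto
      define t where "t = Bi *\<^sub>v z"
      have t: "t \<in> carrier_vec n" using Bic z by (simp add: t_def)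
      have Bt: "B *\<^sub>v t = z" unfolding t_def using assoc_mult_mat_vec[OF Bc Bic z(1)] BBi z by simp
      have "u \<bullet> t = 0" using key[OF t] Bt z by simp
      then have "t \<in> proj_hyperplane n u" using t unfolding proj_hyperplane_def by blast
      then show "z \<in> (\<lambda>y. B *\<^sub>v y) ` proj_hyperplane n u" using Bt by blast
    qed
  qed
  then show ?thesis using BG by blast
qed

lemma core1:
  assumes v: "v \<in> carrier_vec n" "v \<noteq> 0\<^sub>v n" and w: "w \<in> carrier_vec n" "w \<noteq> 0\<^sub>v n"
    and A: "A \<in> carrier (GL n :: 'a::field mat monoid)" and st: "stab A (proj_point n v)"
  shows "\<exists>B\<in>carrier (GL n). stab (B * A * inv\<^bsub>GL n\<^esub> B) (proj_hyperplane n w)"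
proof -
  have Ac: "A \<in> carrier_mat n n" using A by (simp add: GL_carrier)
  obtain c where e: "A *\<^sub>v v = c \<cdot>\<^sub>v v" using eig_pt[OF Ac v(1) st] by blast
  have c: "c \<noteq> 0" using lam_nz[OF A v e] .
  obtain u where u: "u \<in> carrier_vec n" "u \<noteq> 0\<^sub>v n" "transpose_mat A *\<^sub>v u = c \<cdot>\<^sub>v u"
    using eig_transpose[OF Ac v e] by blast
  have sth: "stab A (proj_hyperplane n u)" using hyp_stab[OF A u(1) u(3) c] .
  obtain B where B: "B \<in> carrier (GL n)" "(\<lambda>y. B *\<^sub>v y) ` proj_hyperplane n u = proj_hyperplane n w"
    using hyp_transport[OF u(1,2) w] by blast
  have Bc: "B \<in> carrier_mat n n" using B by (simp add: GL_carrier)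
  have "stab (B * A * inv\<^bsub>GL n\<^esub> B) (proj_hyperplane n w)"
    by (rule stab_conj[OF Ac Bc GL_inv(1)[OF B(1)] proj_hyp_sub proj_hyp_sub GL_inv(3)[OF B(1)] sth B(2)])
  then show ?thesis using B(1) by blast
qed

lemma core2:
  assumes v: "v \<in> carrier_vec n" "v \<noteq> 0\<^sub>v n" and w: "w \<in> carrier_vec n" "w \<noteq> 0\<^sub>v n"
    and A: "A \<in> carrier (GL n :: 'a::field mat monoid)" and st: "stab A (proj_hyperplane n w)"
  shows "\<exists>B\<in>carrier (GL n). stab (B * A * inv\<^bsub>GL n\<^esub> B) (proj_point n v)"
proof -
  have Ac: "A \<in> carrier_mat n n" using A by (simp add: GL_carrier)
  have "\<And>y. y \<in> proj_hyperplane n w \<Longrightarrow> (transpose_mat A *\<^sub>v w) \<bullet> y = 0"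
  proof -
    fix y assume y: "y \<in> proj_hyperplane n w"
    then have yc: "y \<in> carrier_vec n" unfolding proj_hyperplane_def by simp
    have "A *\<^sub>v y \<in> proj_hyperplane n w" using st y unfolding stab_def by blast
    then have "w \<bullet> (A *\<^sub>v y) = 0" unfolding proj_hyperplane_def by simp
    then show "(transpose_mat A *\<^sub>v w) \<bullet> y = 0" using transpose_vec_mult_scalar[OF Ac yc w(1)] by simp
  qed
  moreover have "transpose_mat A *\<^sub>v w \<in> carrier_vec n" using Ac w by simp
  ultimately obtain c where e: "transpose_mat A *\<^sub>v w = c \<cdot>\<^sub>v w"
    using perp[OF w] by blast
  obtain v1 where v1: "v1 \<in> carrier_vec n" "v1 \<noteq> 0\<^sub>v n" "transpose_mat (transpose_mat A) *\<^sub>v v1 = c \<cdot>\<^sub>v v1"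
    using eig_transpose[of "transpose_mat A" n w c] Ac w e by auto
  have e1: "A *\<^sub>v v1 = c \<cdot>\<^sub>v v1" using v1(3) by simp
  have c: "c \<noteq> 0" using lam_nz[OF A v1(1,2) e1] .
  have stp: "stab A (proj_point n v1)" using pt_stab[OF Ac v1(1) e1 c] .
  obtain M where M: "M \<in> carrier (GL n :: 'a mat monoid)" "M *\<^sub>v v1 = v" using transitive[OF v1(1,2) v] by blast
  have Mc: "M \<in> carrier_mat n n" using M by (simp add: GL_carrier)
  have "stab (M * A * inv\<^bsub>GL n\<^esub> M) (proj_point n v)"
    by (rule stab_conj[OF Ac Mc GL_inv(1)[OF M(1)] proj_point_sub[OF v1(1)] proj_point_sub[OF v(1)]
          GL_inv(3)[OF M(1)] stp pt_transport[OF Mc v1(1) M(2)]])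
  then show ?thesis using M(1) by blast
qed

theorem mainTheorem2:
  fixes n :: nat and x Hyp :: "'a::field vec set"
  assumes "n \<ge> 2"
    and "is_proj_point n x"
    and "is_proj_hyperplane n Hyp"
  shows "EC_triple (wreath (PGL n :: 'a mat set monoid) {1, 2} Sym2)
           (wreath_sub (PGL_stab n x) {1, 2} Sym2)
           (wreath_sub (PGL_stab n Hyp) {1, 2} Sym2)"
proof -
  have n: "n \<ge> 1" using assms(1) by simp
  obtain v where v: "v \<in> carrier_vec n" "v \<noteq> 0\<^sub>v n" "x = proj_point n v"
    using assms(2) unfolding is_proj_point_def by blast
  obtain w where w: "w \<in> carrier_vec n" "w \<noteq> 0\<^sub>v n" "Hyp = proj_hyperplane n w"
    using assms(3) unfolding is_proj_hyperplane_def by blast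
  show ?thesis unfolding v(3) w(3)
  proof (rule EC_from[OF group_PGL[OF n] PGL_stab_subgroup[OF n proj_point_sub[OF v(1)]]
        PGL_stab_subgroup[OF n proj_hyp_sub]])
    fix a assume "a \<in> PGL_stab n (proj_point n v)"
    then show "\<exists>m\<in>carrier (PGL n). m \<otimes>\<^bsub>PGL n\<^esub> a \<otimes>\<^bsub>PGL n\<^esub> inv\<^bsub>PGL n\<^esub> m \<in> PGL_stab n (proj_hyperplane n w)"
      using PGL_conj_cond[OF n core1[OF v(1,2) w(1,2)]] by blast
  next
    fix a assume "a \<in> PGL_stab n (proj_hyperplane n w)"
    then show "\<exists>m\<in>carrier (PGL n). m \<otimes>\<^bsub>PGL n\<^esub> a \<otimes>\<^bsub>PGL n\<^esub> inv\<^bsub>PGL n\<^esub> m \<in> PGL_stab n (proj_point n v)"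
      using PGL_conj_cond[OF n core2[OF v(1,2) w(1,2)]] by blast
  qed
qed

end
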